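(* For any graph \(G\), \(OPT(G)\geq 2LP(G)-MM(G)\).
   Context: All graphs are finite, undirected and simple. \(OPT(G)\) is the minimum size of a vertex cover of \(G\) (a set of vertices containing at least one end-point of each edge). \(MM(G)\) is the size of a maximum matching of \(G\). \(LP(G)\) is the optimum value of the linear program: minimize \(\sum_{v\in V(G)}x_v\) subject to \(x_u+x_v\ge 1\) for every edge \(\{u,v\}\in E(G)\) and \(0\le x_v\le 1\) for every \(v\in V(G)\). *)

theory Defs
  imports Complex_Main
begin

definition graph :: "'a set \<Rightarrow> 'a set set \<Rightarrow> bool" where
  "graph V E \<longleftrightarrow> finite V \<and> (\<forall>e\<in>E. \<exists>u v. e = {u, v} \<and> u \<noteq> v \<and> u \<in> V \<and> v \<in> V)"

definition vertex_cover :: "'a set \<Rightarrow> 'a set set \<Rightarrow> 'a set \<Rightarrow> bool" where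
  "vertex_cover V E C \<longleftrightarrow> C \<subseteq> V \<and> (\<forall>e\<in>E. e \<inter> C \<noteq> {})"

definition matching :: "'a set set \<Rightarrow> 'a set set \<Rightarrow> bool" where
  "matching E M \<longleftrightarrow> M \<subseteq> E \<and> (\<forall>e1\<in>M. \<forall>e2\<in>M. e1 \<noteq> e2 \<longrightarrow> e1 \<inter> e2 = {})"

definition OPT :: "'a set \<Rightarrow> 'a set set \<Rightarrow> nat" where
  "OPT V E = Min {card C | C. vertex_cover V E C}"

definition MM :: "'a set \<Rightarrow> 'a set set \<Rightarrow> nat" where
  "MM V E = Max {card M | M. matching E M}"

definition lp_feasible :: "'a set \<Rightarrow> 'a set set \<Rightarrow> ('a \<Rightarrow> real) \<Rightarrow> bool" where
  "lp_feasible V E x \<longleftrightarrow> (\<forall>u v. {u, v} \<in> E \<longrightarrow> x u + x v \<ge> 1) \<and> (\<forall>v\<in>V. 0 \<le> x v \<and> x v \<le> 1)"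

text \<open>Optimum value of the vertex-cover LP relaxation (the minimum exists; we take the infimum).\<close>
definition LP :: "'a set \<Rightarrow> 'a set set \<Rightarrow> real" where
  "LP V E = Inf {(\<Sum>v\<in>V. x v) | x. lp_feasible V E x}"

end

theory Submission imports Defs begin

definition nbr :: "('a \<times> 'b) set \<Rightarrow> 'a set \<Rightarrow> 'b set" where
  "nbr R S = {b. \<exists>a\<in>S. (a,b) \<in> R}"

definition bmatch :: "('a \<times> 'b) set \<Rightarrow> 'a set \<Rightarrow> ('a \<times> 'b) set \<Rightarrow> bool" where
  "bmatch R A P \<longleftrightarrow> P \<subseteq> R \<inter> (A \<times> UNIV) \<and>
     (\<forall>p\<in>P. \<forall>q\<in>P. (fst p = fst q \<or> snd p = snd q) \<longrightarrow> p = q)"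

lemma finite_nbr: "finite R \<Longrightarrow> finite (nbr R S)"
proof -
  assume "finite R"
  have "nbr R S \<subseteq> snd ` R" unfolding nbr_def by force
  thus ?thesis using \<open>finite R\<close> finite_subset by blast
qed

lemma nbr_Un: "nbr R (S \<union> T) = nbr R S \<union> nbr R T"
  unfolding nbr_def by blast

lemma konig:
  "finite A \<Longrightarrow> finite R \<Longrightarrow> \<exists>S P. S \<subseteq> A \<and> bmatch R A P \<and> card A + card (nbr R S) \<le> card P + card S"
proof (induction "card A" arbitrary: A R rule: less_induct)
  case less
  note fA = less.prems(1) and fR = less.prems(2)
  define df where "df = (\<lambda>S. int (card S) - int (card (nbr R S)))"
  have "finite (df ` Pow A)" using fA by simp
  moreover have "df ` Pow A \<noteq> {}" by blast
  ultimately have "Max (df ` Pow A) \<in> df ` Pow A" by (rule Max_in)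
  then obtain S0 where S0A: "S0 \<subseteq> A" and S0m: "df S0 = Max (df ` Pow A)" by auto
  have S0max: "df S \<le> df S0" if "S \<subseteq> A" for S
    using S0m that \<open>finite (df ` Pow A)\<close> by (simp add: Max_ge)
  show ?case
  proof (cases "\<exists>S1. S1 \<noteq> {} \<and> S1 \<subset> A \<and> df S1 = df S0")
    case True
    then obtain S1 where S1: "S1 \<noteq> {}" "S1 \<subset> A" "df S1 = df S0" by blast
    have fS1: "finite S1" using S1(2) fA finite_subset by blast
    define R1 where "R1 = R \<inter> (S1 \<times> UNIV)"
    have "card S1 < card A" using S1(2) fA psubset_card_mono by blast
    moreover have "finite R1" unfolding R1_def using fR by simp
    ultimately have "\<exists>S P. S \<subseteq> S1 \<and> bmatch R1 S1 P \<and> card S1 + card (nbr R1 S) \<le> card P + card S"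
      using less.hyps[of S1 R1] fS1 by blast
    then obtain U P1 where U: "U \<subseteq> S1" "bmatch R1 S1 P1"
        "card S1 + card (nbr R1 U) \<le> card P1 + card U"
      by blast
    have "nbr R1 U = nbr R U" using U(1) unfolding R1_def nbr_def by blast
    moreover have "df U \<le> df S1" using S1 S0max U(1) by auto
    ultimately have P1c: "card (nbr R S1) \<le> card P1" using U(3) unfolding df_def by simp
    define A2 where "A2 = A - S1"
    define R2 where "R2 = {p\<in>R. snd p \<notin> nbr R S1}"
    have "A2 \<subset> A" unfolding A2_def using S1 by blast
    hence "card A2 < card A" using fA psubset_card_mono by blast
    moreover have "finite R2" unfolding R2_def using fR by simp
    moreover have "finite A2" unfolding A2_def using fA by simp
    ultimately have "\<exists>S P. S \<subseteq> A2 \<and> bmatch R2 A2 P \<and> card A2 + card (nbr R2 S) \<le> card P + card S"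
      using less.hyps[of A2 R2] by blast
    then obtain T P2 where T: "T \<subseteq> A2" "bmatch R2 A2 P2"
        "card A2 + card (nbr R2 T) \<le> card P2 + card T"
      by blast
    have n2: "nbr R2 T = nbr R T - nbr R S1" unfolding R2_def nbr_def by auto
    have fT: "finite T" using T(1) \<open>finite A2\<close> finite_subset by blast
    have "nbr R S1 \<union> nbr R T = nbr R S1 \<union> (nbr R T - nbr R S1)" by blast
    moreover have "card (nbr R S1 \<union> (nbr R T - nbr R S1)) = card (nbr R S1) + card (nbr R T - nbr R S1)"
      by (rule card_Un_disjoint) (auto simp: finite_nbr[OF fR])
    ultimately have cU: "card (nbr R (S1 \<union> T)) = card (nbr R S1) + card (nbr R2 T)"
      using n2 by (simp add: nbr_Un)
    have "S1 \<inter> T = {}" using T(1) unfolding A2_def by blast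
    hence cST: "card (S1 \<union> T) = card S1 + card T" using fS1 fT card_Un_disjoint by blast
    have "S1 \<union> T \<subseteq> A" using S1(2) T(1) unfolding A2_def by blast
    hence "df (S1 \<union> T) \<le> df S1" using S0max S1(3) by simp
    hence "card T \<le> card (nbr R2 T)" using cU cST unfolding df_def by simp
    hence P2c: "card A2 \<le> card P2" using T(3) by simp
    have cA2: "card A2 = card A - card S1" unfolding A2_def using S1(2) fS1
      by (simp add: card_Diff_subset psubset_imp_subset)
    have cS1A: "card S1 \<le> card A" using S1(2) fA card_mono psubset_imp_subset by blast
    define P where "P = P1 \<union> P2"
    have P1s: "P1 \<subseteq> R \<inter> (S1 \<times> UNIV)" using U(2) unfolding bmatch_def R1_def by blast
    have P2s: "P2 \<subseteq> R2 \<inter> (A2 \<times> UNIV)" using T(2) unfolding bmatch_def by blast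
    have disj: "fst p \<noteq> fst q \<and> snd p \<noteq> snd q" if "p \<in> P1" "q \<in> P2" for p q
    proof -
      have "fst p \<in> S1" "p \<in> R" using P1s that(1) by auto
      hence "snd p \<in> nbr R S1" unfolding nbr_def by (cases p) auto
      moreover have "snd q \<notin> nbr R S1" "fst q \<notin> S1" using P2s that(2) unfolding R2_def A2_def by auto
      ultimately show ?thesis using \<open>fst p \<in> S1\<close> by metis
    qed
    have bP: "bmatch R A P"
    proof -
      have "P \<subseteq> R \<inter> (A \<times> UNIV)" unfolding P_def using P1s P2s S1(2) unfolding R2_def A2_def by blast
      moreover have "\<forall>p\<in>P. \<forall>q\<in>P. (fst p = fst q \<or> snd p = snd q) \<longrightarrow> p = q"
        unfolding P_def using U(2) T(2) disj unfolding bmatch_def by (metis Un_iff)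
      ultimately show ?thesis unfolding bmatch_def by blast
    qed
    have "finite P1" "finite P2" using P1s P2s fR \<open>finite R2\<close> finite_subset by blast+
    moreover have "P1 \<inter> P2 = {}" using disj by blast
    ultimately have "card P = card P1 + card P2" unfolding P_def by (simp add: card_Un_disjoint)
    hence "card A + card (nbr R S1) \<le> card P + card S1" using P1c P2c cA2 cS1A by linarith
    with bP S1(2) show ?thesis by (intro exI[of _ S1] exI[of _ P]) auto
  next
    case False
    have strict: "df U < df S0" if "U \<noteq> {}" "U \<subset> A" for U
    proof -
      have "df U \<le> df S0" using S0max[of U] that(2) by blast
      moreover have "df U \<noteq> df S0" using False that by blast
      ultimately show ?thesis by simp
    qed
    show ?thesis
    proof (cases "\<exists>p\<in>R. fst p \<in> A")
      case False
      have "nbr R A = {}" using False unfolding nbr_def by force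
      moreover have "bmatch R A {}" unfolding bmatch_def by simp
      ultimately show ?thesis by (intro exI[of _ A] exI[of _ "{}"]) auto
    next
      case True
      then obtain a b where ab: "(a,b) \<in> R" "a \<in> A" by force
      define A' where "A' = A - {a}"
      define R' where "R' = {p\<in>R. snd p \<noteq> b}"
      have "card A' < card A" unfolding A'_def using ab fA by (metis card_Diff1_less)
      moreover have "finite A'" "finite R'" unfolding A'_def R'_def using fA fR by auto
      ultimately have "\<exists>S P. S \<subseteq> A' \<and> bmatch R' A' P \<and> card A' + card (nbr R' S) \<le> card P + card S"
        using less.hyps[of A' R'] by blast
      then obtain U P' where U: "U \<subseteq> A'" "bmatch R' A' P'"
          "card A' + card (nbr R' U) \<le> card P' + card U"
        by blast
      have "nbr R' U = nbr R U - {b}" unfolding R'_def nbr_def by auto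
      hence nU: "card (nbr R U) \<le> card (nbr R' U) + 1" using finite_nbr[OF fR, of U]
        by (cases "b \<in> nbr R U") (auto simp: card_Diff_singleton_if card_gt_0_iff)
      have cA': "card A' = card A - 1" unfolding A'_def using ab fA by simp
      have cA1: "card A \<ge> 1" using ab fA by (metis One_nat_def Suc_leI card_gt_0_iff empty_iff)
      define P where "P = insert (a,b) P'"
      have P's: "P' \<subseteq> R' \<inter> (A' \<times> UNIV)" using U(2) unfolding bmatch_def by blast
      have nin: "fst q \<noteq> a \<and> snd q \<noteq> b" if "q \<in> P'" for q
        using P's that unfolding R'_def A'_def by auto
      have bP: "bmatch R A P"
      proof -
        have "P \<subseteq> R \<inter> (A \<times> UNIV)" unfolding P_def using P's ab unfolding R'_def A'_def by blast
        moreover have "\<forall>p\<in>P. \<forall>q\<in>P. (fst p = fst q \<or> snd p = snd q) \<longrightarrow> p = q"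
          unfolding P_def using U(2) nin unfolding bmatch_def by fastforce
        ultimately show ?thesis unfolding bmatch_def by blast
      qed
      have "finite P'" using P's \<open>finite R'\<close> finite_subset by blast
      moreover have "(a,b) \<notin> P'" using nin by force
      ultimately have cP: "card P = card P' + 1" unfolding P_def by simp
      have "int (card A) - df S0 \<le> int (card P)"
      proof (cases "U = {}")
        case True
        have "df {} = 0" unfolding df_def nbr_def by simp
        hence "0 \<le> df S0" using S0max[of "{}"] by simp
        moreover have "card A' \<le> card P'" using U(3) True by simp
        ultimately show ?thesis using cP cA' cA1 by linarith
      next
        case False
        have "U \<subset> A" using U(1) ab unfolding A'_def by blast
        hence "df U < df S0" using strict False by blast
        thus ?thesis using U(3) nU cP cA' cA1 unfolding df_def by linarith
      qed
      hence "card A + card (nbr R S0) \<le> card P + card S0" unfolding df_def by linarith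
      with bP S0A show ?thesis by (intro exI[of _ S0] exI[of _ P]) auto
    qed
  qed
qed


lemma sum_ind: "finite V \<Longrightarrow> X \<subseteq> V \<Longrightarrow> (\<Sum>v\<in>V. if v \<in> X then (c::real) else 0) = c * real (card X)"
proof -
  assume "finite V" "X \<subseteq> V"
  have "(\<Sum>v\<in>V. if v \<in> X then c else 0) = sum (\<lambda>_. c) (V \<inter> X)"
    using sum.inter_restrict[OF \<open>finite V\<close>, of "\<lambda>_. c" X] by simp
  also have "V \<inter> X = X" using \<open>X \<subseteq> V\<close> by blast
  finally show ?thesis by simp
qed

theorem lemma1:
  fixes V :: "'a set" and E :: "'a set set"
  assumes "graph V E"
  shows "real (OPT V E) \<ge> 2 * LP V E - real (MM V E)"
proof -
  have fV: "finite V" using assms unfolding graph_def by blast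
  have Eedge: "\<exists>a b. e = {a, b} \<and> a \<noteq> b \<and> a \<in> V \<and> b \<in> V" if "e \<in> E" for e
    using assms that unfolding graph_def by blast
  have EP: "E \<subseteq> Pow V" using Eedge by blast
  have fE: "finite E" by (rule finite_subset[OF EP]) (simp add: fV)
  define CS where "CS = {card C | C. vertex_cover V E C}"
  have "vertex_cover V E V" unfolding vertex_cover_def using Eedge by blast
  hence CSne: "CS \<noteq> {}" unfolding CS_def by blast
  have "CS \<subseteq> {..card V}" unfolding CS_def vertex_cover_def using fV card_mono by fastforce
  hence "finite CS" using finite_subset by blast
  hence "OPT V E \<in> CS" unfolding OPT_def CS_def[symmetric] using CSne Min_in by blast
  then obtain C where vc: "vertex_cover V E C" and cC: "card C = OPT V E" unfolding CS_def by auto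
  have CV: "C \<subseteq> V" and cov: "\<And>e. e \<in> E \<Longrightarrow> e \<inter> C \<noteq> {}" using vc unfolding vertex_cover_def by auto
  have fC: "finite C" using CV fV finite_subset by blast
  define R where "R = {(c,i). c \<in> C \<and> i \<in> V - C \<and> {c,i} \<in> E}"
  have "R \<subseteq> C \<times> V" unfolding R_def by blast
  hence fR: "finite R" using fC fV finite_subset by blast
  obtain S P where SC: "S \<subseteq> C" and bP: "bmatch R C P"
      and ineq: "card C + card (nbr R S) \<le> card P + card S"
    using konig[OF fC fR] by blast
  define N where "N = nbr R S"
  have NV: "N \<subseteq> V - C" unfolding N_def nbr_def R_def by blast
  have PR: "P \<subseteq> R" using bP unfolding bmatch_def by blast
  have Pinj: "p = q" if "p \<in> P" "q \<in> P" "fst p = fst q \<or> snd p = snd q" for p q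
    using bP that unfolding bmatch_def by blast
  define M where "M = (\<lambda>(c,i). {c,i}) ` P"
  have injM: "inj_on (\<lambda>(c,i). {c,i}) P"
  proof (rule inj_onI)
    fix p q assume pq: "p \<in> P" "q \<in> P" "(\<lambda>(c,i). {c,i}) p = (\<lambda>(c,i). {c::'a,i}) q"
    obtain c1 i1 c2 i2 where pe: "p = (c1,i1)" "q = (c2,i2)" by force
    have "(c1,i1) \<in> R" "(c2,i2) \<in> R" using pq(1,2) PR pe by auto
    hence "c1 \<in> C" "i1 \<notin> C" "c2 \<in> C" "i2 \<notin> C" unfolding R_def by simp_all
    moreover have "{c1,i1} = {c2,i2}" using pq(3) pe by simp
    ultimately have "c1 = c2 \<and> i1 = i2" by (metis doubleton_eq_iff)
    thus "p = q" using pe by simp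
  qed
  have cM: "card M = card P" unfolding M_def using injM card_image by blast
  have mM: "matching E M"
    unfolding matching_def
  proof (intro conjI ballI impI)
    show "M \<subseteq> E"
    proof
      fix e assume "e \<in> M"
      then obtain p where p: "p \<in> P" "e = (\<lambda>(c,i). {c,i}) p" unfolding M_def by blast
      obtain c i where q: "p = (c,i)" by (cases p)
      have "(c,i) \<in> R" using p q PR by auto
      hence "{c,i} \<in> E" unfolding R_def by simp
      thus "e \<in> E" using p q by simp
    qed
  next
    fix e1 e2 assume e: "e1 \<in> M" "e2 \<in> M" "e1 \<noteq> e2"
    obtain p1 where p1: "p1 \<in> P" "e1 = (\<lambda>(c,i). {c,i}) p1" using e(1) unfolding M_def by blast
    obtain p2 where p2: "p2 \<in> P" "e2 = (\<lambda>(c,i). {c,i}) p2" using e(2) unfolding M_def by blast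
    obtain c1 i1 where q1: "p1 = (c1,i1)" by (cases p1)
    obtain c2 i2 where q2: "p2 = (c2,i2)" by (cases p2)
    have pe: "(c1,i1) \<in> P" "(c2,i2) \<in> P" "e1 = {c1,i1}" "e2 = {c2,i2}"
      using p1 p2 q1 q2 by simp_all
    have ne: "(c1,i1) \<noteq> (c2,i2)"
    proof
      assume "(c1,i1) = (c2,i2)"
      hence "e1 = e2" using pe(3,4) by simp
      thus False using e(3) by contradiction
    qed
    have d1: "c1 \<noteq> c2"
    proof
      assume "c1 = c2"
      hence "fst (c1,i1) = fst (c2,i2)" by simp
      hence "(c1,i1) = (c2,i2)" using Pinj[OF pe(1,2)] by blast
      with ne show False by contradiction
    qed
    have d2: "i1 \<noteq> i2"
    proof
      assume "i1 = i2"
      hence "snd (c1,i1) = snd (c2,i2)" by simp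
      hence "(c1,i1) = (c2,i2)" using Pinj[OF pe(1,2)] by blast
      with ne show False by contradiction
    qed
    have "(c1,i1) \<in> R" "(c2,i2) \<in> R" using pe(1,2) PR by auto
    hence d3: "c1 \<in> C" "i1 \<notin> C" "c2 \<in> C" "i2 \<notin> C" unfolding R_def by simp_all
    have "c1 \<noteq> i2" "i1 \<noteq> c2" using d3 by auto
    thus "e1 \<inter> e2 = {}" using pe(3,4) d1 d2 by auto
  qed
  define MS where "MS = {card M | M. matching E M}"
  have "MS \<subseteq> {..card E}" unfolding MS_def matching_def using fE card_mono by fastforce
  hence "finite MS" using finite_subset by blast
  hence MMge: "card P \<le> MM V E" unfolding MM_def MS_def[symmetric] using mM cM MS_def Max_ge by fastforce
  define x where "x = (\<lambda>v. (if v \<in> C - S then (1::real) else 0) + (if v \<in> S then 1/2 else 0) + (if v \<in> N then 1/2 else 0))"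
  have feas: "lp_feasible V E x"
    unfolding lp_feasible_def
  proof (intro conjI allI impI ballI)
    fix u v assume uv: "{u, v} \<in> E"
    then obtain a b where ab: "{u,v} = {a,b}" "a \<noteq> b" "a \<in> V" "b \<in> V" using Eedge by blast
    hence uvV: "u \<in> V" "v \<in> V" "u \<noteq> v" by (auto simp: doubleton_eq_iff)
    have cuv: "u \<in> C \<or> v \<in> C" using cov[OF uv] by blast
    have hC: "x w \<ge> 1/2" if "w \<in> C" for w using that unfolding x_def using NV by auto
    have hCS: "x w = 1" if "w \<in> C" "w \<notin> S" for w using that NV unfolding x_def by auto
    have h0: "x w \<ge> 0" for w unfolding x_def by auto
    have hN: "x w \<ge> 1/2" if "w \<in> N" for w using that unfolding x_def using NV by auto
    have n1: "v \<in> N" if "u \<in> S" "v \<notin> C"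
      using that uv uvV SC unfolding N_def nbr_def R_def by blast
    have n2: "u \<in> N" if "v \<in> S" "u \<notin> C"
    proof -
      have "{v,u} \<in> E" using uv by (simp add: insert_commute)
      thus ?thesis using that uvV SC unfolding N_def nbr_def R_def by blast
    qed
    show "1 \<le> x u + x v"
    proof -
      consider (a) "u \<in> C" "v \<in> C" | (b) "u \<in> C" "v \<notin> C" | (c) "u \<notin> C" "v \<in> C"
        using cuv by blast
      thus ?thesis
      proof cases
        case a thus ?thesis using hC[of u] hC[of v] by linarith
      next
        case b thus ?thesis
        proof (cases "u \<in> S")
          case True thus ?thesis using b n1 hN[of v] hC[of u] by linarith
        next
          case False thus ?thesis using b hCS[of u] h0[of v] by linarith
        qed
      next
        case c thus ?thesis
        proof (cases "v \<in> S")
          case True thus ?thesis using c n2 hN[of u] hC[of v] by linarith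
        next
          case False thus ?thesis using c hCS[of v] h0[of u] by linarith
        qed
      qed
    qed
  next
    fix v assume "v \<in> V"
    show "0 \<le> x v" unfolding x_def by auto
    show "x v \<le> 1" unfolding x_def using NV SC by auto
  qed
  have sx: "(\<Sum>v\<in>V. x v) = real (card (C - S)) + real (card S) / 2 + real (card N) / 2"
  proof -
    have "(\<Sum>v\<in>V. x v) = (\<Sum>v\<in>V. if v \<in> C - S then (1::real) else 0) + (\<Sum>v\<in>V. if v \<in> S then 1/2 else 0)
       + (\<Sum>v\<in>V. if v \<in> N then 1/2 else 0)" unfolding x_def by (simp add: sum.distrib)
    also have "\<dots> = real (card (C - S)) + real (card S) / 2 + real (card N) / 2"
    proof -
      have "C - S \<subseteq> V" "S \<subseteq> V" "N \<subseteq> V" using CV SC NV by auto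
      note h = sum_ind[OF fV this(1), of 1] sum_ind[OF fV this(2), of "1/2"] sum_ind[OF fV this(3), of "1/2"]
      show ?thesis unfolding h by simp
    qed
    finally show ?thesis .
  qed
  have cCS: "card (C - S) = card C - card S" using SC fC card_Diff_subset finite_subset by blast
  have "card S \<le> card C" using SC fC card_mono by blast
  hence "2 * (\<Sum>v\<in>V. x v) \<le> real (OPT V E) + real (MM V E)"
    using sx cCS ineq MMge cC unfolding N_def by (simp add: of_nat_diff)
  moreover have "LP V E \<le> (\<Sum>v\<in>V. x v)"
    unfolding LP_def
  proof (rule cInf_lower)
    show "(\<Sum>v\<in>V. x v) \<in> {\<Sum>v\<in>V. x v |x. lp_feasible V E x}" using feas by blast
    show "bdd_below {\<Sum>v\<in>V. x v |x. lp_feasible V E x}"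
      unfolding bdd_below_def lp_feasible_def by (intro exI[of _ 0]) (auto intro: sum_nonneg)
  qed
  ultimately show ?thesis by linarith
qed

end
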